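(* Let $\Sigma=\{0,1\}$. Define $\delta:\Sigma^*\times\Sigma^*\to\mathbb{Z}_{\ge0}$ by $\delta(u,v)=d_2(u,v)$ for $u,v\ne\varepsilon$, and $\delta(u,\varepsilon)=\delta(\varepsilon,u)$ given by $\delta(\varepsilon,\varepsilon)=0$, $\delta(000,\varepsilon)=1$, and $\delta(u,\varepsilon)=d_2(u,000)$ for $u\notin\{\varepsilon,000\}$. Then $\delta$ is an integer-valued Hamming compatible metric on $\Sigma^*$ which is not weakly uniform, and $\delta(000,\varepsilon)=1<2=d_2(000,\varepsilon)$.
   Context: $\Sigma^*$ is the set of all finite words over $\Sigma$, $l(u)$ the length of $u$, $\varepsilon$ the empty word, $H$ the Hamming distance between equal-length words. For arbitrary $x,y$, if $l(x)\ge l(y)$, $\underline{x}$ is the prefix of $x$ of length $l(y)$ and $\underline{y}=y$ (symmetrically otherwise). $d_2(x,y)=H(\underline{x},\underline{y})+\lceil |l(x)-l(y)|/2\rceil$ (a metric on $\Sigma^*$). A metric $\delta$ is Hamming compatible if $\delta(x,y)=H(x,y)$ whenever $l(x)=l(y)$. Two words of the same length $n$ are Hamming opposites if their Hamming distance is $n$; $\delta$ is weakly uniform if $\delta(x,\varepsilon)=\delta(y,\varepsilon)$ for all Hamming opposites $x,y$. *)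

theory Defs
  imports Main
begin

text \<open>Words over an alphabet are lists; for \<open>\<Sigma> = {0,1}\<close> we use \<open>bool list\<close>,
  with 0 = False and 1 = True.\<close>

definition hamming :: "'a list \<Rightarrow> 'a list \<Rightarrow> nat" where
  "hamming x y = card {i. i < length x \<and> x ! i \<noteq> y ! i}"

definition d2 :: "'a list \<Rightarrow> 'a list \<Rightarrow> nat" where
  "d2 x y = (let m = min (length x) (length y);
                 k = max (length x) (length y) - m
             in hamming (take m x) (take m y) + (k + 1) div 2)"

definition is_metric :: "('a list \<Rightarrow> 'a list \<Rightarrow> nat) \<Rightarrow> bool" where
  "is_metric \<delta> \<longleftrightarrow>
     (\<forall>x y. \<delta> x y = 0 \<longleftrightarrow> x = y) \<and>
     (\<forall>x y. \<delta> x y = \<delta> y x) \<and>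
     (\<forall>x y z. \<delta> x z \<le> \<delta> x y + \<delta> y z)"

definition hamming_compatible :: "('a list \<Rightarrow> 'a list \<Rightarrow> nat) \<Rightarrow> bool" where
  "hamming_compatible \<delta> \<longleftrightarrow>
     (\<forall>x y. length x = length y \<longrightarrow> \<delta> x y = hamming x y)"

definition hamming_opposites :: "'a list \<Rightarrow> 'a list \<Rightarrow> bool" where
  "hamming_opposites x y \<longleftrightarrow> length x = length y \<and> hamming x y = length x"

definition weakly_uniform :: "('a list \<Rightarrow> 'a list \<Rightarrow> nat) \<Rightarrow> bool" where
  "weakly_uniform \<delta> \<longleftrightarrow>
     (\<forall>x y. hamming_opposites x y \<longrightarrow> \<delta> x [] = \<delta> y [])"

definition delta_ex :: "bool list \<Rightarrow> bool list \<Rightarrow> nat" where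
  "delta_ex u v =
     (if u = [] \<and> v = [] then 0
      else if v = [] then (if u = [False, False, False] then 1 else d2 u [False, False, False])
      else if u = [] then (if v = [False, False, False] then 1 else d2 v [False, False, False])
      else d2 u v)"

end

theory Submission
  imports Defs
begin

definition H :: "nat \<Rightarrow> 'a list \<Rightarrow> 'a list \<Rightarrow> nat" where
  "H m x y = card {i. i < m \<and> x ! i \<noteq> y ! i}"

lemma H_tri: "H m x z \<le> H m x y + H m y z"
proof -
  have "{i. i < m \<and> x ! i \<noteq> z ! i} \<subseteq> {i. i < m \<and> x ! i \<noteq> y ! i} \<union> {i. i < m \<and> y ! i \<noteq> z ! i}"
    by auto
  hence "H m x z \<le> card ({i. i < m \<and> x ! i \<noteq> y ! i} \<union> {i. i < m \<and> y ! i \<noteq> z ! i})"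
    unfolding H_def by (intro card_mono) auto
  also have "\<dots> \<le> H m x y + H m y z" unfolding H_def by (rule card_Un_le)
  finally show ?thesis .
qed

lemma H_mono: "m \<le> m' \<Longrightarrow> H m x y \<le> H m' x y"
  unfolding H_def by (intro card_mono) auto

lemma H_ext: "m \<le> m' \<Longrightarrow> H m' x y \<le> H m x y + (m' - m)"
proof -
  assume "m \<le> m'"
  have "{i. i < m' \<and> x ! i \<noteq> y ! i} \<subseteq> {i. i < m \<and> x ! i \<noteq> y ! i} \<union> {m..<m'}"
    by auto
  hence "H m' x y \<le> card ({i. i < m \<and> x ! i \<noteq> y ! i} \<union> {m..<m'})"
    unfolding H_def by (intro card_mono) auto
  also have "\<dots> \<le> H m x y + card {m..<m'}" unfolding H_def by (rule card_Un_le)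
  finally show ?thesis by simp
qed

lemma H_sym: "H m x y = H m y x"
  unfolding H_def by metis

lemma d2_H: "d2 x y = H (min (length x) (length y)) x y
   + (max (length x) (length y) - min (length x) (length y) + 1) div 2"
proof -
  let ?m = "min (length x) (length y)"
  have "{i. i < length (take ?m x) \<and> take ?m x ! i \<noteq> take ?m y ! i} = {i. i < ?m \<and> x ! i \<noteq> y ! i}"
    by auto
  thus ?thesis unfolding d2_def Let_def hamming_def H_def by simp
qed

lemma arith3: "min a c - min (min a b) c + (max a c - min a c + 1) div 2
   \<le> (max a b - min a b + 1) div 2 + (max b c - min b c + 1) div 2" for a b c :: nat
proof -
  have A: "\<And>p q::nat. (p + q + 1) div 2 \<le> (p + 1) div 2 + (q + 1) div 2" by presburger
  have B: "\<And>p q::nat. p + (q + 1) div 2 \<le> (p + 1) div 2 + (p + q + 1) div 2" by presburger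
  show ?thesis
  proof (cases "b \<ge> min a c")
    case True
    hence "min a c - min (min a b) c = 0" by simp
    moreover have "max a c - min a c \<le> (max a b - min a b) + (max b c - min b c)" by simp
    ultimately show ?thesis using A[of "max a b - min a b" "max b c - min b c"]
      by (smt (verit) add_le_mono1 div_le_mono le_add1 le_trans add.commute plus_nat.add_0)
  next
    case False
    show ?thesis
    proof (cases "a \<le> c")
      case True
      then show ?thesis using False B[of "a - b" "c - a"]
        by (simp add: min_def max_def)
    next
      case f2: False
      then show ?thesis using False B[of "c - b" "a - c"]
        by (simp add: min_def max_def)
    qed
  qed
qed

lemma d2_tri: "d2 x z \<le> d2 x y + d2 y z"
proof -
  define a where "a = length x"
  define b where "b = length y"
  define c where "c = length z"
  define k where "k = min (min a b) c"
  have "H (min a c) x z \<le> H k x z + (min a c - k)" by (rule H_ext) (auto simp: k_def)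
  also have "\<dots> \<le> H k x y + H k y z + (min a c - k)" using H_tri[of k x z y] by simp
  also have "\<dots> \<le> H (min a b) x y + H (min b c) y z + (min a c - k)"
  proof -
    have "k \<le> min a b" "k \<le> min b c" by (auto simp: k_def)
    thus ?thesis using H_mono[of k "min a b" x y] H_mono[of k "min b c" y z] by linarith
  qed
  finally have "H (min a c) x z \<le> H (min a b) x y + H (min b c) y z + (min a c - k)" .
  with arith3[of a c b] show ?thesis
    unfolding d2_H a_def[symmetric] b_def[symmetric] c_def[symmetric] k_def by linarith
qed

lemma d2_sym: "d2 x y = d2 y x"
  unfolding d2_H by (simp add: H_sym min.commute max.commute)

lemma d2_zero: "d2 x y = 0 \<longleftrightarrow> x = y"
proof
  assume h: "d2 x y = 0"
  hence "(max (length x) (length y) - min (length x) (length y) + 1) div 2 = 0" unfolding d2_H by simp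
  hence "max (length x) (length y) - min (length x) (length y) = 0" by presburger
  hence len: "length x = length y" by simp
  have "H (length x) x y = 0" using h len unfolding d2_H by simp
  hence "{i. i < length x \<and> x ! i \<noteq> y ! i} = {}" unfolding H_def by simp
  thus "x = y" using len by (auto intro: nth_equalityI)
next
  assume "x = y" thus "d2 x y = 0" unfolding d2_H H_def by simp
qed

lemma d2_eqlen: "length x = length y \<Longrightarrow> d2 x y = hamming x y"
  unfolding d2_def Let_def by simp

definition f :: "bool list \<Rightarrow> nat" where
  "f u = (if u = [False, False, False] then 1 else d2 u [False, False, False])"

lemma f_ge: "d2 u [False, False, False] \<le> f u"
  unfolding f_def using d2_zero[of u u] by auto

lemma f_tri: "y \<noteq> [] \<Longrightarrow> f z \<le> f y + d2 y z"
proof (cases "z = [False, False, False]")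
  case True
  assume "y \<noteq> []"
  show ?thesis
  proof (cases "y = [False, False, False]")
    case True thus ?thesis using \<open>z = _\<close> by (simp add: f_def)
  next
    case False thus ?thesis using \<open>z = _\<close> d2_zero[of y z] by (simp add: f_def)
  qed
next
  case False
  have "f z = d2 z [False, False, False]" using False by (simp add: f_def)
  also have "\<dots> \<le> d2 z y + d2 y [False, False, False]" by (rule d2_tri)
  also have "\<dots> \<le> f y + d2 y z" using f_ge[of y] d2_sym[of z y] by simp
  finally show ?thesis .
qed

lemma delta_alt: "delta_ex u v =
     (if u = [] \<and> v = [] then 0 else if v = [] then f u else if u = [] then f v else d2 u v)"
  unfolding delta_ex_def f_def by simp

lemma f_pos: "u \<noteq> [] \<Longrightarrow> f u \<noteq> 0"
  unfolding f_def using d2_zero[of u "[False, False, False]"] by auto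

lemma delta_metric: "is_metric delta_ex"
  unfolding is_metric_def
proof (intro conjI allI)
  fix x y show "(delta_ex x y = 0) = (x = y)"
    unfolding delta_alt using f_pos d2_zero by auto
next
  fix x y show "delta_ex x y = delta_ex y x"
    unfolding delta_alt using d2_sym by auto
next
  fix x y z
  show "delta_ex x z \<le> delta_ex x y + delta_ex y z"
  proof (cases "x = []"; cases "y = []"; cases "z = []")
    assume "x \<noteq> []" "y = []" "z \<noteq> []"
    thus ?thesis unfolding delta_alt
      using d2_tri[of x z "[False, False, False]"] f_ge[of x] f_ge[of z]
        d2_sym[of z "[False, False, False]"] by simp
  next
    assume "x = []" "y \<noteq> []" "z \<noteq> []"
    thus ?thesis unfolding delta_alt using f_tri[of y z] by simp
  next
    assume "x \<noteq> []" "y \<noteq> []" "z = []"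
    thus ?thesis unfolding delta_alt using f_tri[of y x] d2_sym[of x y] by simp
  next
    assume "x \<noteq> []" "y \<noteq> []" "z \<noteq> []"
    thus ?thesis unfolding delta_alt using d2_tri by simp
  qed (auto simp: delta_alt)
qed

lemma ham3: "hamming [True, True, True] [False, False, False] = 3"
proof -
  have "{i. i < length [True, True, True] \<and> [True, True, True] ! i \<noteq> [False, False, False] ! i} = {..<3}"
    by (auto simp: nth_Cons' less_Suc_eq)
  thus ?thesis unfolding hamming_def by simp
qed

lemma ham3': "hamming [False, False, False] [True, True, True] = 3"
proof -
  have "{i. i < length [False, False, False] \<and> [False, False, False] ! i \<noteq> [True, True, True] ! i} = {..<3}"
    by (auto simp: nth_Cons' less_Suc_eq)
  thus ?thesis unfolding hamming_def by simp
qed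

theorem mainTheorem11:
  shows "is_metric delta_ex \<and> hamming_compatible delta_ex \<and> \<not> weakly_uniform delta_ex
         \<and> delta_ex [False, False, False] [] = 1 \<and> d2 [False, False, False] ([] :: bool list) = 2"
proof (intro conjI)
  show "is_metric delta_ex" by (rule delta_metric)
  show "hamming_compatible delta_ex"
    unfolding hamming_compatible_def
  proof (intro allI impI)
    fix x y :: "bool list" assume l: "length x = length y"
    show "delta_ex x y = hamming x y"
    proof (cases "x = []")
      case True thus ?thesis using l by (simp add: delta_ex_def hamming_def)
    next
      case False
      hence "y \<noteq> []" using l by auto
      thus ?thesis using False l d2_eqlen[OF l] by (simp add: delta_ex_def)
    qed
  qed
  show "\<not> weakly_uniform delta_ex"
  proof
    assume "weakly_uniform delta_ex"
    moreover have "hamming_opposites [False, False, False] [True, True, True]"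
      unfolding hamming_opposites_def using ham3' by simp
    ultimately have "delta_ex [False, False, False] [] = delta_ex [True, True, True] []"
      unfolding weakly_uniform_def by blast
    moreover have "delta_ex [True, True, True] [] = 3"
      using d2_eqlen[of "[True, True, True]" "[False, False, False]"] ham3
      by (simp add: delta_ex_def)
    ultimately show False by (simp add: delta_ex_def)
  qed
  show "delta_ex [False, False, False] [] = 1" by (simp add: delta_ex_def)
  show "d2 [False, False, False] ([] :: bool list) = 2"
    by (simp add: d2_def hamming_def)
qed

end
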